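(* Let $G$ be a tree that is perfectly symmetric at each level, with per-level child counts $N_1,\dots,N_D$ and per-level link capacities $c_1,\dots,c_D$, as described in the context. Define $\lambda^*(G)$ as the optimal value of $$\max_{\pi\in\Pi_c}\ \lambda\quad\text{s.t.}\quad \lambda\prod_{d'=d(v)+1}^{D}N_{d'}\le \bar\mu^{\pi}_{e(v)}\,c_{e(v)}\ \ \forall v\neq\text{root},\qquad \sum_{v'\in\mathcal C_v}\bar\mu^{\pi}_{e(v')}\le 1\ \ \forall v \text{ with children},$$ where the empty product (for $d(v)=D$) equals $1$. Then $$\lambda^*(G)=\min_{0\le d<D}\ \frac{c_{d+1}}{\prod_{d'=d+1}^{D}N_{d'}},$$ and this value is attained by the universal round-robin (URR) policy.
   Context: The network is a rooted tree $G$. The root (server) is at level $0$, nodes at levels $1,\dots,D-1$ are network nodes, the nodes at level $D-1$ are access points (APs), and the flows (customers) attached to the APs form level $D$, the leaves. "Perfectly symmetric at each level" means that every node at level $d$ ($0\le d\le D-1$) has exactly $N_{d+1}$ children, for fixed positive integers $N_1,\dots,N_D$. In particular each AP has $N_D$ flows, and exactly $\prod_{d'=d(v)+1}^{D}N_{d'}$ flows lie in the subtree of a node $v$ at level $d(v)$. Each non-root node $v$ has a unique uplink $e(v)$ to its parent, and $\mathcal C_v$ denotes the set of children of $v$. The capacity of $e(v)$, in packets per time slot, is $c_{e(v)}=c_{d(v)}$, for fixed positive numbers $c_1,\dots,c_D$. Time is slotted. The interference constraint is that in each slot, at most one link among the uplinks of the children of any given node may be scheduled. Links whose parents are different may be scheduled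 simultaneously. We write $\mu_e(t)\in\{0,1\}$ for the indicator that link $e$ is scheduled in slot $t$. $\Pi_c$ is the class of cyclic, work-conserving schedules obeying the interference constraint. A schedule $\pi$ is cyclic with period $K^\pi$ if $\mu^\pi(t)=\mu^\pi(t+K^\pi)$ for all $t$. Its time-average activation rate is $\bar\mu^\pi_e=\frac1{K^\pi}\sum_{t=0}^{K^\pi-1}\mu^\pi_e(t)$. The universal round-robin (URR) policy schedules, at every node, the uplinks of its children in a fixed cyclic round-robin order. Hence the uplink of every level-$d$ node is scheduled exactly once every $N_d$ slots. *)

theory Defs
  imports Complex_Main
begin

text \<open>Nodes of the perfectly symmetric tree are encoded by their path from the root:
  a node at level d is a list xs of length d with xs!i < N (i+1).  The root is [],
  levels 1..D-1 are network nodes (level D-1 = access points), level D are the flows.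
  The uplink e(v) of a non-root node v is identified with v itself.\<close>

definition tree_nodes :: "(nat \<Rightarrow> nat) \<Rightarrow> nat \<Rightarrow> nat list set" where
  "tree_nodes N D = {xs. length xs \<le> D \<and> (\<forall>i<length xs. xs ! i < N (Suc i))}"

definition flows_below :: "(nat \<Rightarrow> nat) \<Rightarrow> nat \<Rightarrow> nat \<Rightarrow> nat" where
  "flows_below N D d = (\<Prod>d'\<in>{d+1..D}. N d')"

text \<open>A schedule is a pair (mu, K): mu t v says the uplink of node v is active in slot t,
  K is its period.\<close>
type_synonym schedule = "(nat \<Rightarrow> nat list \<Rightarrow> bool) \<times> nat"

definition cyclic :: "schedule \<Rightarrow> bool" where
  "cyclic \<pi> = (snd \<pi> > 0 \<and> (\<forall>t v. fst \<pi> (t + snd \<pi>) v = fst \<pi> t v))"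

definition interference_ok :: "(nat \<Rightarrow> nat) \<Rightarrow> nat \<Rightarrow> schedule \<Rightarrow> bool" where
  "interference_ok N D \<pi> = (\<forall>t. \<forall>v\<in>tree_nodes N D. length v < D \<longrightarrow>
      card {i. i < N (Suc (length v)) \<and> fst \<pi> t (v @ [i])} \<le> 1)"

definition work_conserving :: "(nat \<Rightarrow> nat) \<Rightarrow> nat \<Rightarrow> schedule \<Rightarrow> bool" where
  "work_conserving N D \<pi> = (\<forall>t. \<forall>v\<in>tree_nodes N D. length v < D \<longrightarrow>
      (\<exists>i < N (Suc (length v)). fst \<pi> t (v @ [i])))"

definition Pi_c :: "(nat \<Rightarrow> nat) \<Rightarrow> nat \<Rightarrow> schedule set" where
  "Pi_c N D = {\<pi>. cyclic \<pi> \<and> work_conserving N D \<pi> \<and> interference_ok N D \<pi>}"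

definition mu_bar :: "schedule \<Rightarrow> nat list \<Rightarrow> real" where
  "mu_bar \<pi> v = (\<Sum>t<snd \<pi>. if fst \<pi> t v then 1 else 0) / real (snd \<pi>)"

definition feasible :: "(nat \<Rightarrow> nat) \<Rightarrow> (nat \<Rightarrow> real) \<Rightarrow> nat \<Rightarrow> schedule \<Rightarrow> real \<Rightarrow> bool" where
  "feasible N c D \<pi> lam =
    ((\<forall>v\<in>tree_nodes N D. v \<noteq> [] \<longrightarrow>
        lam * real (flows_below N D (length v)) \<le> mu_bar \<pi> v * c (length v)) \<and>
     (\<forall>v\<in>tree_nodes N D. length v < D \<longrightarrow>
        (\<Sum>i<N (Suc (length v)). mu_bar \<pi> (v @ [i])) \<le> 1))"

definition lambda_star :: "(nat \<Rightarrow> nat) \<Rightarrow> (nat \<Rightarrow> real) \<Rightarrow> nat \<Rightarrow> real" where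
  "lambda_star N c D = (GREATEST lam. \<exists>\<pi>\<in>Pi_c N D. feasible N c D \<pi> lam)"

definition URR :: "(nat \<Rightarrow> nat) \<Rightarrow> nat \<Rightarrow> schedule" where
  "URR N D = ((\<lambda>t v. v \<noteq> [] \<and> length v \<le> D \<and> t mod N (length v) = last v), \<Prod>d\<in>{1..D}. N d)"

end

theory Submission
  imports Defs
begin

lemma count_mod:
  fixes n m r :: nat
  assumes "r < n"
  shows "(\<Sum>t<n*m. if t mod n = r then 1 else 0 :: real) = real m"
proof (induction m)
  case 0 then show ?case by simp
next
  case (Suc m)
  have "(\<Sum>t<n*Suc m. if t mod n = r then 1 else 0 :: real)
      = (\<Sum>t<n*m + n. if t mod n = r then 1 else 0)" by (simp add: algebra_simps)
  also have "\<dots> = (\<Sum>t<n*m. if t mod n = r then 1 else 0) + (\<Sum>t=n*m..<n*m+n. if t mod n = r then 1 else 0 :: real)"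
    using sum.atLeastLessThan_concat[of 0 "n*m" "n*m+n" "\<lambda>t. if t mod n = r then 1 else 0 :: real"]
    by (simp add: atLeast0LessThan)
  also have "(\<Sum>t=n*m..<n*m+n. if t mod n = r then 1 else 0 :: real) = (\<Sum>t=0..<n. if (t + n*m) mod n = r then 1 else 0)"
    using sum.shift_bounds_nat_ivl[of "\<lambda>t. if t mod n = r then 1 else 0 :: real" 0 "n*m" n]
    by (simp add: add.commute)
  also have "\<dots> = (\<Sum>t=0..<n. if t = r then 1 else 0)"
    by (rule sum.cong) auto
  also have "\<dots> = 1" using assms by simp
  finally show ?case using Suc by simp
qed

lemma mu_bar_URR:
  assumes N: "\<And>d. 1 \<le> d \<Longrightarrow> d \<le> D \<Longrightarrow> N d > 0"
    and v: "v \<in> tree_nodes N D" "v \<noteq> []"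
  shows "mu_bar (URR N D) v = 1 / real (N (length v))"
proof -
  define k where "k = length v"
  have k: "1 \<le> k" "k \<le> D" using v by (auto simp: k_def tree_nodes_def Suc_le_eq)
  have lastv: "last v < N k"
  proof -
    have "last v = v ! (k - 1)" using v(2) by (simp add: k_def last_conv_nth)
    moreover have "k - 1 < length v" using k by (simp add: k_def)
    moreover have "Suc (k - 1) = k" using k by simp
    ultimately show ?thesis using v(1) unfolding tree_nodes_def k_def by (metis (no_types, lifting) mem_Collect_eq)
  qed
  define m where "m = (\<Prod>d\<in>{1..D}-{k}. N d)"
  have K: "(\<Prod>d\<in>{1..D}. N d) = N k * m"
    unfolding m_def using k by (simp add: prod.remove)
  have mpos: "m > 0" unfolding m_def using N by (simp add: prod_pos)
  have Nk: "N k > 0" using N k by auto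
  have "mu_bar (URR N D) v = (\<Sum>t<N k * m. if t mod N k = last v then 1 else 0 :: real) / real (N k * m)"
    unfolding mu_bar_def URR_def using v k K by (simp add: k_def)
  also have "\<dots> = real m / real (N k * m)" using count_mod[OF lastv] by simp
  also have "\<dots> = 1 / real (N k)" using mpos Nk by simp
  finally show ?thesis by (simp add: k_def)
qed

lemma URR_Pi:
  assumes N: "\<And>d. 1 \<le> d \<Longrightarrow> d \<le> D \<Longrightarrow> N d > 0"
  shows "URR N D \<in> Pi_c N D"
proof -
  have cyc: "cyclic (URR N D)"
    unfolding cyclic_def
  proof (intro conjI allI)
    show "0 < snd (URR N D)" using N by (simp add: URR_def prod_pos)
    fix t v
    show "fst (URR N D) (t + snd (URR N D)) v = fst (URR N D) t v"
    proof (cases "v \<noteq> [] \<and> length v \<le> D")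
      case True
      then have "N (length v) dvd (\<Prod>d\<in>{1..D}. N d)"
        by (intro dvd_prodI) (auto simp: Suc_le_eq)
      then obtain q where q: "(\<Prod>d\<in>{1..D}. N d) = N (length v) * q" by (auto elim: dvdE)
      have "(t + N (length v) * q) mod N (length v) = t mod N (length v)" by simp
      then show ?thesis unfolding URR_def fst_conv snd_conv q by simp
    next
      case False then show ?thesis unfolding URR_def fst_conv snd_conv by blast
    qed
  qed
  have wc: "work_conserving N D (URR N D)"
    unfolding work_conserving_def
  proof (intro allI ballI impI)
    fix t v assume "v \<in> tree_nodes N D" "length v < D"
    then have "N (Suc (length v)) > 0" using N by simp
    then have "t mod N (Suc (length v)) < N (Suc (length v))" by simp
    moreover have "fst (URR N D) t (v @ [t mod N (Suc (length v))])"
      unfolding URR_def fst_conv using \<open>length v < D\<close> by simp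
    ultimately show "\<exists>i<N (Suc (length v)). fst (URR N D) t (v @ [i])" by blast
  qed
  have io: "interference_ok N D (URR N D)"
    unfolding interference_ok_def
  proof (intro allI ballI impI)
    fix t and v :: "nat list" assume "length v < D"
    have "{i. i < N (Suc (length v)) \<and> fst (URR N D) t (v @ [i])} \<subseteq> {t mod N (Suc (length v))}"
      unfolding URR_def fst_conv by auto
    then have "card {i. i < N (Suc (length v)) \<and> fst (URR N D) t (v @ [i])} \<le> card {t mod N (Suc (length v))}"
      by (intro card_mono) auto
    then show "card {i. i < N (Suc (length v)) \<and> fst (URR N D) t (v @ [i])} \<le> 1" by simp
  qed
  show ?thesis using cyc wc io by (simp add: Pi_c_def)
qed

lemma prod_split:
  assumes "d < D"
  shows "(\<Prod>d'\<in>{d+1..D}. N d') = N (d+1) * flows_below N D (d+1)"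
  unfolding flows_below_def using assms
  by (metis Suc_eq_plus1 Suc_le_eq prod.atLeast_Suc_atMost)

theorem lemma2:
  fixes N :: "nat \<Rightarrow> nat" and c :: "nat \<Rightarrow> real" and D :: nat
  assumes "D \<ge> 1"
    and "\<And>d. 1 \<le> d \<Longrightarrow> d \<le> D \<Longrightarrow> N d > 0"
    and "\<And>d. 1 \<le> d \<Longrightarrow> d \<le> D \<Longrightarrow> c d > 0"
  shows "lambda_star N c D = (MIN d\<in>{..<D}. c (d + 1) / real (\<Prod>d'\<in>{d+1..D}. N d'))
     \<and> URR N D \<in> Pi_c N D
     \<and> feasible N c D (URR N D) (MIN d\<in>{..<D}. c (d + 1) / real (\<Prod>d'\<in>{d+1..D}. N d'))"
proof -
  define f where "f d = c (d + 1) / real (\<Prod>d'\<in>{d+1..D}. N d')" for d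
  define M where "M = (MIN d\<in>{..<D}. f d)"
  have "0 \<in> {..<D}" using assms(1) by simp
  then have ne: "{..<D} \<noteq> {}" by blast
  have Mle: "M \<le> f d" if "d < D" for d
    unfolding M_def using that by (intro Min_le) auto
  have Npos: "N (d+1) > 0" if "d < D" for d using assms(2) that by auto
  have fbpos: "flows_below N D d > 0" for d
    unfolding flows_below_def using assms(2) by (simp add: prod_pos)
  have urr: "URR N D \<in> Pi_c N D" using URR_Pi assms(2) by blast
  have feas: "feasible N c D (URR N D) M"
    unfolding feasible_def
  proof (intro conjI ballI impI)
    fix v assume v: "v \<in> tree_nodes N D" "v \<noteq> []"
    define k where "k = length v"
    have k: "1 \<le> k" "k \<le> D" using v by (auto simp: k_def tree_nodes_def Suc_le_eq)
    have mb: "mu_bar (URR N D) v = 1 / real (N k)" using mu_bar_URR[OF assms(2) v] k_def by simp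
    have ps: "(\<Prod>d'\<in>{k-1+1..D}. N d') = N k * flows_below N D k"
      using prod_split[of "k-1" D N] k by simp
    have "M * real (flows_below N D k) \<le> f (k-1) * real (flows_below N D k)"
      using Mle[of "k-1"] k by (intro mult_right_mono) auto
    also have "\<dots> = c k / real (N k)"
      unfolding f_def using ps k fbpos[of k] by simp
    finally show "M * real (flows_below N D (length v)) \<le> mu_bar (URR N D) v * c (length v)"
      using mb k_def by simp
  next
    fix v assume v: "v \<in> tree_nodes N D" "length v < D"
    have "(\<Sum>i<N (Suc (length v)). mu_bar (URR N D) (v @ [i])) = (\<Sum>i<N (Suc (length v)). 1 / real (N (Suc (length v))))"
    proof (rule sum.cong)
      fix i assume "i \<in> {..<N (Suc (length v))}"
      then have "v @ [i] \<in> tree_nodes N D" using v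
        by (auto simp: tree_nodes_def nth_append less_Suc_eq)
      then show "mu_bar (URR N D) (v @ [i]) = 1 / real (N (Suc (length v)))"
        using mu_bar_URR[OF assms(2)] by fastforce
    qed simp
    also have "\<dots> = 1" using Npos[of "length v"] v by simp
    finally show "(\<Sum>i<N (Suc (length v)). mu_bar (URR N D) (v @ [i])) \<le> 1" by simp
  qed
  have upper: "lam \<le> M" if "\<pi> \<in> Pi_c N D" and fe: "feasible N c D \<pi> lam" for \<pi> lam
    unfolding M_def
  proof (rule Min.boundedI)
    show "finite (f ` {..<D})" by simp
    show "f ` {..<D} \<noteq> {}" using ne by simp
    fix a assume "a \<in> f ` {..<D}"
    then obtain d where d: "d < D" "a = f d" by auto
    define v where "v = replicate d (0::nat)"
    have vt: "v \<in> tree_nodes N D" using d assms(2) by (auto simp: v_def tree_nodes_def)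
    have ch: "v @ [i] \<in> tree_nodes N D" if "i < N (d+1)" for i
      using vt that d by (auto simp: tree_nodes_def nth_append v_def less_Suc_eq)
    have lv: "length v = d" by (simp add: v_def)
    have each: "lam * real (flows_below N D (d+1)) \<le> mu_bar \<pi> (v @ [i]) * c (d+1)" if "i < N (d+1)" for i
      using fe ch[OF that] lv unfolding feasible_def by auto
    have sm: "(\<Sum>i<N (d+1). mu_bar \<pi> (v @ [i])) \<le> 1"
      using fe vt lv d unfolding feasible_def by auto
    have "real (N (d+1)) * (lam * real (flows_below N D (d+1))) = (\<Sum>i<N (d+1). lam * real (flows_below N D (d+1)))"
      by simp
    also have "\<dots> \<le> (\<Sum>i<N (d+1). mu_bar \<pi> (v @ [i]) * c (d+1))"
      by (rule sum_mono) (use each in auto)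
    also have "\<dots> = (\<Sum>i<N (d+1). mu_bar \<pi> (v @ [i])) * c (d+1)"
      by (simp add: sum_distrib_right)
    also have "\<dots> \<le> c (d+1)" using sm assms(3)[of "d+1"] d
      by (simp add: mult_left_le_one_le)
    finally have "lam * real (\<Prod>d'\<in>{d+1..D}. N d') \<le> c (d+1)"
      using prod_split[OF d(1), of N] by (simp add: algebra_simps)
    moreover have "real (\<Prod>d'\<in>{d+1..D}. N d') > 0"
      using prod_split[OF d(1), of N] Npos[OF d(1)] fbpos[of "d+1"] by simp
    ultimately show "lam \<le> a" unfolding d(2) f_def by (simp add: pos_le_divide_eq)
  qed
  have ls: "lambda_star N c D = M"
    unfolding lambda_star_def
    by (rule Greatest_equality) (use urr feas upper in auto)
  show ?thesis using ls urr feas unfolding M_def f_def by simp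
qed

end
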